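(* Let $\langle X,\mathcal{M},O\rangle$ be a measurement scenario in which $\mathcal{M}$ is a measurement cover of $X$, let $R$ be a commutative semiring, and let $e=\{e_C\}_{C\in\mathcal{M}}$ be a no-signaling empirical model for $\mathcal{M}$ with values in $\mathcal{D}_R$. The following are equivalent: (a) $e$ has a global distribution, i.e. there exists $d\in\mathcal{D}_R\mathcal{E}(X)$ with $d|_C=e_C$ for every $C\in\mathcal{M}$; (b) $e$ is realized by a factorisable hidden-variable model.
   Context: A measurement scenario $\langle X,\mathcal{M},O\rangle$ consists of a finite set $X$ of measurements, a family $\mathcal{M}$ of subsets of $X$ (contexts), and a finite set $O$ of outcomes. $\mathcal{M}$ is a measurement cover if $\bigcup_{C\in\mathcal{M}}C=X$ and $\mathcal{M}$ is an antichain ($C\subseteq C'$ in $\mathcal{M}$ implies $C=C'$). The event sheaf assigns to $U\subseteq X$ the set $\mathcal{E}(U)=O^U$ of functions $s:U\to O$ (events), and for $U\subseteq U'$ the restriction $s\mapsto s|_U$. For a set $Y$, an $R$-distribution on $Y$ is a finitely supported function $d:Y\to R$ with $\sum_{y\in Y}d(y)=1$; $\mathcal{D}_R(Y)$ denotes the set of these. $\mathcal{D}_R\mathcal{E}(U):=\mathcal{D}_R(\mathcal{E}(U))$, and for $U\subseteq U'$ and $d\in\mathcal{D}_R\mathcal{E}(U')$ the marginal is $d|_U(s)=\sum_{s'\in\mathcal{E}(U'),\,s'|_U=s}d(s')$ for $s\in\mathcal{E}(U)$. For a single measurement $m$ write $d|_m$ for $d|_{\{m\}}$. A no-signaling empirical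 model for $\mathcal{M}$ is a family $\{e_C\}_{C\in\mathcal{M}}$ with $e_C\in\mathcal{D}_R\mathcal{E}(C)$ and $e_C|_{C\cap C'}=e_{C'}|_{C\cap C'}$ for all $C,C'\in\mathcal{M}$. A hidden-variable model $h$ over a set $\Lambda$ consists of $h_\Lambda\in\mathcal{D}_R(\Lambda)$ and, for each $\lambda\in\Lambda$ and $C\in\mathcal{M}$, $h^\lambda_C\in\mathcal{D}_R\mathcal{E}(C)$, such that $h^\lambda_C|_{C\cap C'}=h^\lambda_{C'}|_{C\cap C'}$ for all $\lambda$ and $C,C'\in\mathcal{M}$. It realizes $e$ if $e_C(s)=\sum_{\lambda\in\Lambda}h^\lambda_C(s)\,h_\Lambda(\lambda)$ for all $C\in\mathcal{M}$ and $s\in\mathcal{E}(C)$. It is factorisable if $h^\lambda_C(s)=\prod_{m\in C}h^\lambda_C|_m(s|_m)$ for all $\lambda$, all $C\in\mathcal{M}$ and all $s\in\mathcal{E}(C)$. *)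

theory Defs
  imports "HOL-Library.FuncSet"
begin

definition measurement_cover :: "'x set \<Rightarrow> 'x set set \<Rightarrow> bool" where
  "measurement_cover X M \<longleftrightarrow> finite X \<and> \<Union>M = X \<and>
     (\<forall>C\<in>M. \<forall>C'\<in>M. C \<subseteq> C' \<longrightarrow> C = C')"

definition events :: "'x set \<Rightarrow> 'o set \<Rightarrow> ('x \<Rightarrow> 'o) set" where
  "events U Os = PiE U (\<lambda>_. Os)"

definition is_distr :: "'a set \<Rightarrow> ('a \<Rightarrow> 'r::comm_semiring_1) \<Rightarrow> bool" where
  "is_distr Y d \<longleftrightarrow> finite {y. d y \<noteq> 0} \<and> {y. d y \<noteq> 0} \<subseteq> Y \<and>
     sum d {y. d y \<noteq> 0} = 1"

definition marg :: "'o set \<Rightarrow> 'x set \<Rightarrow> 'x set \<Rightarrow> (('x \<Rightarrow> 'o) \<Rightarrow> 'r::comm_semiring_1)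
     \<Rightarrow> ('x \<Rightarrow> 'o) \<Rightarrow> 'r" where
  "marg Os U' U d s = (\<Sum>s'\<in>{s'\<in>events U' Os. restrict s' U = s}. d s')"

definition empirical_model ::
  "'o set \<Rightarrow> 'x set set \<Rightarrow> ('x set \<Rightarrow> ('x \<Rightarrow> 'o) \<Rightarrow> 'r::comm_semiring_1) \<Rightarrow> bool" where
  "empirical_model Os M e \<longleftrightarrow>
     (\<forall>C\<in>M. is_distr (events C Os) (e C)) \<and>
     (\<forall>C\<in>M. \<forall>C'\<in>M. \<forall>s\<in>events (C \<inter> C') Os.
        marg Os C (C \<inter> C') (e C) s = marg Os C' (C \<inter> C') (e C') s)"

definition has_global_distr ::
  "'o set \<Rightarrow> 'x set \<Rightarrow> 'x set set \<Rightarrow> ('x set \<Rightarrow> ('x \<Rightarrow> 'o) \<Rightarrow> 'r::comm_semiring_1) \<Rightarrow> bool" where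
  "has_global_distr Os X M e \<longleftrightarrow>
     (\<exists>d. is_distr (events X Os) d \<and>
          (\<forall>C\<in>M. \<forall>s\<in>events C Os. marg Os X C d s = e C s))"

definition hv_model ::
  "'o set \<Rightarrow> 'x set set \<Rightarrow> 'l set \<Rightarrow> ('l \<Rightarrow> 'r::comm_semiring_1)
     \<Rightarrow> ('l \<Rightarrow> 'x set \<Rightarrow> ('x \<Rightarrow> 'o) \<Rightarrow> 'r) \<Rightarrow> bool" where
  "hv_model Os M L hL h \<longleftrightarrow>
     is_distr L hL \<and>
     (\<forall>l\<in>L. \<forall>C\<in>M. is_distr (events C Os) (h l C)) \<and>
     (\<forall>l\<in>L. \<forall>C\<in>M. \<forall>C'\<in>M. \<forall>s\<in>events (C \<inter> C') Os.
        marg Os C (C \<inter> C') (h l C) s = marg Os C' (C \<inter> C') (h l C') s)"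

text \<open>Realization: the sum over L is taken over the (finite) support of hL.\<close>
definition realizes ::
  "'o set \<Rightarrow> 'x set set \<Rightarrow> 'l set \<Rightarrow> ('l \<Rightarrow> 'r::comm_semiring_1)
     \<Rightarrow> ('l \<Rightarrow> 'x set \<Rightarrow> ('x \<Rightarrow> 'o) \<Rightarrow> 'r) \<Rightarrow> ('x set \<Rightarrow> ('x \<Rightarrow> 'o) \<Rightarrow> 'r) \<Rightarrow> bool" where
  "realizes Os M L hL h e \<longleftrightarrow>
     (\<forall>C\<in>M. \<forall>s\<in>events C Os.
        e C s = (\<Sum>l\<in>{l\<in>L. hL l \<noteq> 0}. h l C s * hL l))"

definition factorisable ::
  "'o set \<Rightarrow> 'x set set \<Rightarrow> 'l set \<Rightarrow> ('l \<Rightarrow> 'x set \<Rightarrow> ('x \<Rightarrow> 'o) \<Rightarrow> 'r::comm_semiring_1) \<Rightarrow> bool" where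
  "factorisable Os M L h \<longleftrightarrow>
     (\<forall>l\<in>L. \<forall>C\<in>M. \<forall>s\<in>events C Os.
        h l C s = (\<Prod>m\<in>C. marg Os C {m} (h l C) (restrict s {m})))"

end

theory Submission imports Defs begin

lemma finite_events: "finite U \<Longrightarrow> finite Os \<Longrightarrow> finite (events U Os)"
  unfolding events_def by (intro finite_PiE) auto

lemma marg_trans:
  assumes "W \<subseteq> V" "V \<subseteq> U" "finite U" "finite Os"
  shows "marg Os V W (marg Os U V d) s = marg Os U W d s"
proof -
  have fV: "finite V" using assms finite_subset by blast
  let ?S = "{s'\<in>events U Os. restrict s' W = s}"
  let ?T = "{t\<in>events V Os. restrict t W = s}"
  have "marg Os V W (marg Os U V d) s = (\<Sum>t\<in>?T. sum d {x. x \<in> ?S \<and> restrict x V = t})"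
    unfolding marg_def
  proof (intro sum.cong refl arg_cong2[where f=sum])
    fix t assume "t \<in> ?T"
    then show "{s' \<in> events U Os. restrict s' V = t} = {x. x \<in> ?S \<and> restrict x V = t}"
      using assms(1) by (auto simp: Int_absorb1)
  qed
  also have "\<dots> = sum d ?S"
  proof (rule sum.group)
    show "finite ?S" using finite_events[OF assms(3,4)] by simp
    show "finite ?T" using finite_events[OF fV assms(4)] by simp
    show "(\<lambda>x. restrict x V) ` ?S \<subseteq> ?T"
      using assms(1,2) by (auto simp: events_def PiE_iff Int_absorb1)
  qed
  finally show ?thesis unfolding marg_def .
qed

lemma distr_sum:
  assumes "is_distr Y d" "finite Y"
  shows "sum d Y = 1"
proof -
  have "sum d Y = sum d {y. d y \<noteq> 0}"
    using assms by (intro sum.mono_neutral_right) (auto simp: is_distr_def)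
  then show ?thesis using assms by (simp add: is_distr_def)
qed

lemma marg_single_sum:
  assumes "m \<in> U" "finite U" "finite Os" "is_distr (events U Os) d"
  shows "(\<Sum>z\<in>Os. marg Os U {m} d (restrict (\<lambda>_. z) {m})) = 1"
proof -
  have "(\<Sum>z\<in>Os. marg Os U {m} d (restrict (\<lambda>_. z) {m}))
      = (\<Sum>z\<in>Os. sum d {s'. s' \<in> events U Os \<and> s' m = z})"
  proof (intro sum.cong refl, unfold marg_def, intro arg_cong2[where f=sum] refl)
    fix z
    show "{s' \<in> events U Os. restrict s' {m} = restrict (\<lambda>_. z) {m}} = {s'. s' \<in> events U Os \<and> s' m = z}"
      by (auto simp: restrict_def fun_eq_iff)
  qed
  also have "\<dots> = (\<Sum>s'\<in>events U Os. sum (\<lambda>z. d s') {z. z \<in> Os \<and> s' m = z})"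
    by (rule sum.swap_restrict) (use finite_events assms in auto)
  also have "\<dots> = (\<Sum>s'\<in>events U Os. d s')"
  proof (rule sum.cong[OF refl])
    fix s' assume "s' \<in> events U Os"
    then have "s' m \<in> Os" using assms(1) by (auto simp: events_def)
    then have "{z. z \<in> Os \<and> s' m = z} = {s' m}" by auto
    then show "sum (\<lambda>z. d s') {z. z \<in> Os \<and> s' m = z} = d s'" by simp
  qed
  also have "\<dots> = 1" using distr_sum[OF assms(4) finite_events[OF assms(2,3)]] .
  finally show ?thesis .
qed


lemma sum_prod_filter:
  fixes g :: "'x \<Rightarrow> 'o \<Rightarrow> 'r::comm_semiring_1"
  assumes "finite X" "finite Os" "C \<subseteq> X" "s \<in> events C Os"
  shows "(\<Sum>s'\<in>{s'\<in>events X Os. restrict s' C = s}. \<Prod>m\<in>X. g m (s' m))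
       = (\<Prod>m\<in>C. g m (s m)) * (\<Prod>m\<in>X - C. \<Sum>z\<in>Os. g m z)"
proof -
  define B where "B m = (if m \<in> C then {s m} else Os)" for m
  have seq: "{s'\<in>events X Os. restrict s' C = s} = PiE X B"
  proof (intro set_eqI iffI)
    fix s' assume "s' \<in> {s'\<in>events X Os. restrict s' C = s}"
    then show "s' \<in> PiE X B" using assms(3)
      by (auto simp: events_def B_def PiE_iff restrict_def fun_eq_iff split: if_splits)
  next
    fix s' assume a: "s' \<in> PiE X B"
    have "s' \<in> events X Os"
      using a assms(4) by (auto simp: events_def B_def PiE_iff split: if_splits)
    moreover have "restrict s' C = s"
    proof
      fix x show "restrict s' C x = s x"
      proof (cases "x \<in> C")
        case True
        then have "x \<in> X" using assms(3) by blast
        then have "s' x \<in> B x" using a by (auto simp: PiE_iff)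
        then show ?thesis using True by (simp add: B_def)
      next
        case False then show ?thesis using assms(4) by (auto simp: events_def PiE_iff extensional_def)
      qed
    qed
    ultimately show "s' \<in> {s'\<in>events X Os. restrict s' C = s}" by simp
  qed
  have "(\<Sum>s'\<in>PiE X B. \<Prod>m\<in>X. g m (s' m)) = (\<Prod>m\<in>X. \<Sum>z\<in>B m. g m z)"
    by (rule prod_sum_PiE[symmetric]) (use assms in \<open>auto simp: B_def\<close>)
  also have "\<dots> = (\<Prod>m\<in>C. \<Sum>z\<in>B m. g m z) * (\<Prod>m\<in>X - C. \<Sum>z\<in>B m. g m z)"
    using assms(1,3) by (metis Diff_partition finite_Un prod.union_disjoint Diff_disjoint)
  also have "\<dots> = (\<Prod>m\<in>C. g m (s m)) * (\<Prod>m\<in>X - C. \<Sum>z\<in>Os. g m z)"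
    by (simp add: B_def)
  finally show ?thesis using seq by simp
qed


lemma b_to_a:
  fixes h :: "'l \<Rightarrow> 'x set \<Rightarrow> ('x \<Rightarrow> 'o) \<Rightarrow> 'r::comm_semiring_1"
  assumes cov: "measurement_cover X M" and fO: "finite Os"
    and hv: "hv_model Os M L hL h" and fac: "factorisable Os M L h"
    and rea: "realizes Os M L hL h e"
  shows "has_global_distr Os X M e"
proof -
  have fX: "finite X" and UX: "\<Union>M = X" using cov by (auto simp: measurement_cover_def)
  have CX: "C \<in> M \<Longrightarrow> C \<subseteq> X" for C using UX by blast
  have fC: "C \<in> M \<Longrightarrow> finite C" for C using CX fX finite_subset by blast
  define Cm where "Cm m = (SOME C. C \<in> M \<and> m \<in> C)" for m
  have Cm: "Cm m \<in> M \<and> m \<in> Cm m" if "m \<in> X" for m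
    unfolding Cm_def by (rule someI_ex) (use that UX in blast)
  define L0 where "L0 = {l\<in>L. hL l \<noteq> 0}"
  have dL: "is_distr L hL" using hv by (simp add: hv_model_def)
  have L0eq: "L0 = {l. hL l \<noteq> 0}" using dL by (auto simp: L0_def is_distr_def)
  have fL0: "finite L0" and sL0: "sum hL L0 = 1" using dL L0eq by (auto simp: is_distr_def)
  have hd: "l \<in> L \<Longrightarrow> C \<in> M \<Longrightarrow> is_distr (events C Os) (h l C)" for l C
    using hv by (simp add: hv_model_def)
  have ns: "l \<in> L \<Longrightarrow> C \<in> M \<Longrightarrow> C' \<in> M \<Longrightarrow> s \<in> events (C \<inter> C') Os \<Longrightarrow>
      marg Os C (C \<inter> C') (h l C) s = marg Os C' (C \<inter> C') (h l C') s" for l C C' s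
    using hv by (simp add: hv_model_def)
  define q where "q l m z = marg Os (Cm m) {m} (h l (Cm m)) (restrict (\<lambda>_. z) {m})" for l m z
  have Q1: "(\<Sum>z\<in>Os. q l m z) = 1" if "l \<in> L" "m \<in> X" for l m
    unfolding q_def using Cm[OF that(2)] fC hd[OF that(1)] fO
    by (intro marg_single_sum) auto
  have Q2: "marg Os C {m} (h l C) (restrict s {m}) = q l m (s m)"
    if l: "l \<in> L" and C: "C \<in> M" and m: "m \<in> C" for l C m s
  proof -
    have mX: "m \<in> X" using CX C m by blast
    define C' where "C' = Cm m"
    have C': "C' \<in> M" "m \<in> C'" using Cm[OF mX] by (auto simp: C'_def)
    have rs: "restrict s {m} = restrict (\<lambda>_. s m) {m}" by (auto simp: restrict_def)
    have "marg Os C {m} (h l C) (restrict s {m})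
        = marg Os (C \<inter> C') {m} (marg Os C (C \<inter> C') (h l C)) (restrict s {m})"
      by (rule marg_trans[symmetric]) (use m C' fC[OF C] fO in auto)
    also have "\<dots> = marg Os (C \<inter> C') {m} (marg Os C' (C \<inter> C') (h l C')) (restrict s {m})"
      unfolding marg_def[of Os "C \<inter> C'" "{m}"]
      by (intro sum.cong refl ns[OF l C C'(1)]) auto
    also have "\<dots> = marg Os C' {m} (h l C') (restrict s {m})"
      by (rule marg_trans) (use m C' fC[OF C'(1)] fO in auto)
    finally show ?thesis unfolding q_def C'_def rs .
  qed
  define d where "d s = (if s \<in> events X Os then
      (\<Sum>l\<in>L0. hL l * (\<Prod>m\<in>X. q l m (s m))) else 0)" for s
  have key: "(\<Sum>s'\<in>{s'\<in>events X Os. restrict s' C = s}. d s')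
       = (\<Sum>l\<in>L0. hL l * (\<Prod>m\<in>C. q l m (s m)))"
    if "C \<subseteq> X" "s \<in> events C Os" for C s
  proof -
    have "(\<Sum>s'\<in>{s'\<in>events X Os. restrict s' C = s}. d s')
      = (\<Sum>s'\<in>{s'\<in>events X Os. restrict s' C = s}. \<Sum>l\<in>L0. hL l * (\<Prod>m\<in>X. q l m (s' m)))"
      by (intro sum.cong refl) (auto simp: d_def)
    also have "\<dots> = (\<Sum>l\<in>L0. hL l * (\<Sum>s'\<in>{s'\<in>events X Os. restrict s' C = s}. \<Prod>m\<in>X. q l m (s' m)))"
      by (subst sum.swap) (simp add: sum_distrib_left)
    also have "\<dots> = (\<Sum>l\<in>L0. hL l * (\<Prod>m\<in>C. q l m (s m)))"
    proof (intro sum.cong refl arg_cong2[where f="(*)"])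
      fix l assume "l \<in> L0"
      then have l: "l \<in> L" by (simp add: L0_def)
      have "(\<Prod>m\<in>X - C. \<Sum>z\<in>Os. q l m z) = 1"
        using Q1[OF l] by (intro prod.neutral) auto
      then show "(\<Sum>s'\<in>{s'\<in>events X Os. restrict s' C = s}. \<Prod>m\<in>X. q l m (s' m)) = (\<Prod>m\<in>C. q l m (s m))"
        using sum_prod_filter[OF fX fO that, of "q l"] by simp
    qed
    finally show ?thesis .
  qed
  show ?thesis unfolding has_global_distr_def
  proof (intro exI conjI ballI)
    have fE: "finite (events X Os)" using finite_events fX fO by blast
    have supp: "{y. d y \<noteq> 0} \<subseteq> events X Os" by (auto simp: d_def)
    have e0: "restrict (\<lambda>_. undefined) {} \<in> events {} Os" by (simp add: events_def)
    have "sum d (events X Os) = 1"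
    proof -
      have "{s' \<in> events X Os. restrict s' {} = restrict (\<lambda>_. undefined) {}} = events X Os"
        by (auto simp: restrict_def)
      then show ?thesis using key[OF _ e0] sL0 by simp
    qed
    moreover have "sum d {y. d y \<noteq> 0} = sum d (events X Os)"
      using fE supp by (intro sum.mono_neutral_left) auto
    ultimately show "is_distr (events X Os) d"
      unfolding is_distr_def using fE supp finite_subset by auto
  next
    fix C s assume C: "C \<in> M" and s: "s \<in> events C Os"
    have "marg Os X C d s = (\<Sum>l\<in>L0. hL l * (\<Prod>m\<in>C. q l m (s m)))"
      unfolding marg_def using key[OF CX[OF C] s] .
    also have "\<dots> = (\<Sum>l\<in>L0. h l C s * hL l)"
    proof (intro sum.cong refl)
      fix l assume "l \<in> L0"
      then have l: "l \<in> L" by (simp add: L0_def)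
      have "h l C s = (\<Prod>m\<in>C. marg Os C {m} (h l C) (restrict s {m}))"
        using fac l C s by (simp add: factorisable_def)
      also have "\<dots> = (\<Prod>m\<in>C. q l m (s m))"
        by (intro prod.cong refl Q2[OF l C])
      finally show "hL l * (\<Prod>m\<in>C. q l m (s m)) = h l C s * hL l" by (simp add: mult.commute)
    qed
    also have "\<dots> = e C s" using rea C s by (simp add: realizes_def L0_def)
    finally show "marg Os X C d s = e C s" .
  qed
qed


lemma marg_delta:
  assumes "V \<subseteq> C" "g \<in> events C Os" "finite C" "finite Os"
  shows "marg Os C V (\<lambda>t. if t = g then (1::'r::comm_semiring_1) else 0) s
       = (if restrict g V = s then 1 else 0)"
proof -
  have "marg Os C V (\<lambda>t. if t = g then (1::'r) else 0) s
      = (\<Sum>t\<in>{t\<in>events C Os. restrict t V = s}. if t = g then 1 else 0)"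
    by (simp add: marg_def)
  also have "\<dots> = (if g \<in> {t\<in>events C Os. restrict t V = s} then 1 else 0)"
    by (rule sum.delta) (use finite_events[OF assms(3,4)] in simp)
  finally show ?thesis using assms(2) by simp
qed


lemma a_to_b:
  fixes e :: "'x set \<Rightarrow> ('x \<Rightarrow> 'o) \<Rightarrow> 'r::comm_semiring_1"
  assumes cov: "measurement_cover X M" and fO: "finite Os"
    and gd: "has_global_distr Os X M e"
  shows "\<exists>(L::nat set) hL h. hv_model Os M L hL h \<and> factorisable Os M L h \<and>
                realizes Os M L hL h e"
proof -
  have fX: "finite X" and UX: "\<Union>M = X" using cov by (auto simp: measurement_cover_def)
  have CX: "C \<in> M \<Longrightarrow> C \<subseteq> X" for C using UX by blast
  have fC: "C \<in> M \<Longrightarrow> finite C" for C using CX fX finite_subset by blast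
  obtain d where d: "is_distr (events X Os) d"
    and dm: "\<And>C s. C \<in> M \<Longrightarrow> s \<in> events C Os \<Longrightarrow> marg Os X C d s = e C s"
    using gd by (auto simp: has_global_distr_def)
  define S where "S = events X Os"
  have fS: "finite S" using finite_events[OF fX fO] by (simp add: S_def)
  obtain f where f: "bij_betw f {0..<card S} S" using ex_bij_betw_nat_finite[OF fS] by blast
  define n where "n = card S"
  define L where "L = {0..<n}"
  define hL where "hL l = (if l < n then d (f l) else 0)" for l
  define h :: "nat \<Rightarrow> 'x set \<Rightarrow> ('x \<Rightarrow> 'o) \<Rightarrow> 'r"
    where "h l C t = (if t = restrict (f l) C then 1 else 0)" for l C t
  have fl: "l \<in> L \<Longrightarrow> f l \<in> S" for l using f by (auto simp: L_def n_def bij_betw_def)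
  have rfl: "l \<in> L \<Longrightarrow> C \<subseteq> X \<Longrightarrow> restrict (f l) C \<in> events C Os" for l C
    using fl[of l] by (auto simp: S_def events_def PiE_iff)
  have sumL: "sum (\<lambda>l. g (f l)) L = sum g S" for g :: "('x \<Rightarrow> 'o) \<Rightarrow> 'r"
    unfolding L_def n_def by (rule sum.reindex_bij_betw[OF f])
  have hvm: "hv_model Os M L hL h"
    unfolding hv_model_def
  proof (intro conjI ballI)
    have supp: "{y. hL y \<noteq> 0} \<subseteq> L" by (auto simp: hL_def L_def)
    have "sum hL {y. hL y \<noteq> 0} = sum hL L"
      using supp by (intro sum.mono_neutral_left) (auto simp: L_def)
    also have "\<dots> = sum (\<lambda>l. d (f l)) L" by (intro sum.cong) (auto simp: hL_def L_def)
    also have "\<dots> = 1" using sumL distr_sum[OF d] fS by (simp add: S_def)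
    finally show "is_distr L hL" unfolding is_distr_def using supp
      by (auto simp: L_def intro: finite_subset)
  next
    fix l C assume l: "l \<in> L" and C: "C \<in> M"
    have "{y. h l C y \<noteq> 0} = {restrict (f l) C}" by (auto simp: h_def)
    then show "is_distr (events C Os) (h l C)"
      unfolding is_distr_def using rfl[OF l CX[OF C]] by (simp add: h_def)
  next
    fix l C C' s assume l: "l \<in> L" and C: "C \<in> M" and C': "C' \<in> M"
    show "marg Os C (C \<inter> C') (h l C) s = marg Os C' (C \<inter> C') (h l C') s"
      unfolding h_def
      using marg_delta[where 'r='r, OF _ rfl[OF l CX[OF C]] fC[OF C] fO, of "C \<inter> C'" s]
        marg_delta[where 'r='r, OF _ rfl[OF l CX[OF C']] fC[OF C'] fO, of "C \<inter> C'" s]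
      by (simp add: Int_commute Int_left_commute)
  qed
  have facm: "factorisable Os M L h"
    unfolding factorisable_def
  proof (intro ballI)
    fix l C s assume l: "l \<in> L" and C: "C \<in> M" and s: "s \<in> events C Os"
    have mm: "marg Os C {m} (h l C) (restrict s {m}) = (if f l m = s m then 1 else 0)"
      if m: "m \<in> C" for m
      unfolding h_def
      using marg_delta[where 'r='r, OF _ rfl[OF l CX[OF C]] fC[OF C] fO, of "{m}" "restrict s {m}"] m
      by (auto simp: fun_eq_iff restrict_def split: if_splits)
    have eqv: "s = restrict (f l) C \<longleftrightarrow> (\<forall>m\<in>C. f l m = s m)"
      using s by (auto simp: events_def PiE_iff extensional_def fun_eq_iff restrict_def)
    show "h l C s = (\<Prod>m\<in>C. marg Os C {m} (h l C) (restrict s {m}))"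
    proof (cases "\<forall>m\<in>C. f l m = s m")
      case True
      then show ?thesis using mm eqv by (simp add: h_def)
    next
      case False
      then obtain m where "m \<in> C" "f l m \<noteq> s m" by blast
      then have "(\<Prod>m\<in>C. marg Os C {m} (h l C) (restrict s {m})) = 0"
        using mm fC[OF C] by (intro prod_zero) auto
      then show ?thesis using False eqv by (simp add: h_def)
    qed
  qed
  have ream: "realizes Os M L hL h e"
    unfolding realizes_def
  proof (intro ballI)
    fix C s assume C: "C \<in> M" and s: "s \<in> events C Os"
    have "(\<Sum>l\<in>{l\<in>L. hL l \<noteq> 0}. h l C s * hL l) = (\<Sum>l\<in>L. h l C s * hL l)"
      by (intro sum.mono_neutral_left) (auto simp: L_def)
    also have "\<dots> = (\<Sum>l\<in>L. (\<lambda>s'. if restrict s' C = s then d s' else 0) (f l))"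
      by (intro sum.cong) (auto simp: h_def hL_def L_def)
    also have "\<dots> = (\<Sum>s'\<in>S. if restrict s' C = s then d s' else 0)" by (rule sumL)
    also have "\<dots> = marg Os X C d s"
      unfolding marg_def S_def using fS by (simp add: S_def sum.inter_filter)
    also have "\<dots> = e C s" using dm[OF C s] .
    finally show "e C s = (\<Sum>l\<in>{l\<in>L. hL l \<noteq> 0}. h l C s * hL l)" by simp
  qed
  show ?thesis using hvm facm ream by blast
qed


theorem theorem1:
  fixes X :: "'x set" and M :: "'x set set" and Os :: "'o set"
    and e :: "'x set \<Rightarrow> ('x \<Rightarrow> 'o) \<Rightarrow> 'r::comm_semiring_1"
  assumes "measurement_cover X M" and "finite Os"
    and "empirical_model Os M e"
  shows "(has_global_distr Os X M e \<longleftrightarrow>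
            (\<exists>(L::nat set) hL h. hv_model Os M L hL h \<and> factorisable Os M L h \<and>
                realizes Os M L hL h e))
       \<and> (\<forall>(L::'l set) hL h. hv_model Os M L hL h \<and> factorisable Os M L h \<and>
                realizes Os M L hL h e \<longrightarrow> has_global_distr Os X M e)"
proof (intro conjI iffI allI impI)
  assume "has_global_distr Os X M e"
  then show "\<exists>(L::nat set) hL h. hv_model Os M L hL h \<and> factorisable Os M L h \<and>
                realizes Os M L hL h e" using a_to_b[OF assms(1,2)] by blast
next
  assume "\<exists>(L::nat set) hL h. hv_model Os M L hL h \<and> factorisable Os M L h \<and>
                realizes Os M L hL h e"
  then show "has_global_distr Os X M e" using b_to_a[OF assms(1,2)] by blast
next
  fix L :: "'l set" and hL h
  assume "hv_model Os M L hL h \<and> factorisable Os M L h \<and> realizes Os M L hL h e"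
  then show "has_global_distr Os X M e" using b_to_a[OF assms(1,2)] by blast
qed

end
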